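(* Let $\Omega$ be a finite set and $f:2^{\Omega}\to\mathbb{R}$ increasing with $f(\emptyset)=0$. Then the multilinear extension $F^M$ of $f$ is $\left(|\Omega|(|\Omega|^{3/2}-1)2^{|\Omega|-4}D[f]\right)$-up-concave.
   Context: Multilinear extension: $F^M(x)=\sum_{\mathcal{S}\subseteq\Omega}f(\mathcal{S})\prod_{i\in\mathcal{S}}x_i\prod_{i\notin\mathcal{S}}(1-x_i)$ for $x\in[0,1]^{|\Omega|}$. $D[f]=\max\{f(\mathcal{A}\cup\mathcal{B}\cup\{s\})-f(\mathcal{A}\cup\mathcal{B})-f(\mathcal{A}\cup\{s\})+f(\mathcal{A}):\mathcal{A},\mathcal{B}\subseteq\Omega,s\in\Omega,|\mathcal{A}|\le|\Omega|-1\}$. $F:[0,1]^n\to\mathbb{R}$ is $\epsilon$-up-concave ($\epsilon\ge0$) if for every $u\in\mathbb{R}^n_{+}$, $x\in[0,1]^n$, the function $G_{x,u}(t)=F(tu+x)$ satisfies $G_{x,u}(\lambda t_1+(1-\lambda)t_2)\ge\lambda G_{x,u}(t_1)+(1-\lambda)G_{x,u}(t_2)-\epsilon$ for all $\lambda\in[0,1]$ and $t_1,t_2\in\mathbb{R}$ such that $t_1u+x$, $t_2u+x$, and $x+\lambda t_1u+(1-\lambda)t_2u$ lie in $[0,1]^n$. *)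

theory Defs
  imports Complex_Main
begin

text \<open>Points of [0,1]^Omega are represented as functions 'a => real; only the
values on Omega matter.\<close>

definition multilinear_ext :: "'a set \<Rightarrow> ('a set \<Rightarrow> real) \<Rightarrow> ('a \<Rightarrow> real) \<Rightarrow> real" where
  "multilinear_ext \<Omega> f x =
     (\<Sum>S\<in>Pow \<Omega>. f S * (\<Prod>i\<in>S. x i) * (\<Prod>i\<in>\<Omega> - S. 1 - x i))"

definition D_f :: "'a set \<Rightarrow> ('a set \<Rightarrow> real) \<Rightarrow> real" where
  "D_f \<Omega> f = Max {f (A \<union> B \<union> {s}) - f (A \<union> B) - f (A \<union> {s}) + f A
                    | A B s. A \<subseteq> \<Omega> \<and> B \<subseteq> \<Omega> \<and> s \<in> \<Omega> \<and> card A \<le> card \<Omega> - 1}"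

definition in_cube :: "'a set \<Rightarrow> ('a \<Rightarrow> real) \<Rightarrow> bool" where
  "in_cube \<Omega> x \<longleftrightarrow> (\<forall>i\<in>\<Omega>. 0 \<le> x i \<and> x i \<le> 1)"

definition eps_up_concave :: "'a set \<Rightarrow> real \<Rightarrow> (('a \<Rightarrow> real) \<Rightarrow> real) \<Rightarrow> bool" where
  "eps_up_concave \<Omega> \<epsilon> F \<longleftrightarrow> \<epsilon> \<ge> 0 \<and>
     (\<forall>u x. (\<forall>i\<in>\<Omega>. u i \<ge> 0) \<longrightarrow> in_cube \<Omega> x \<longrightarrow>
       (\<forall>lam t1 t2. 0 \<le> lam \<longrightarrow> lam \<le> 1 \<longrightarrow>
          in_cube \<Omega> (\<lambda>i. t1 * u i + x i) \<longrightarrow>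
          in_cube \<Omega> (\<lambda>i. t2 * u i + x i) \<longrightarrow>
          in_cube \<Omega> (\<lambda>i. x i + lam * t1 * u i + (1 - lam) * t2 * u i) \<longrightarrow>
          F (\<lambda>i. (lam * t1 + (1 - lam) * t2) * u i + x i)
            \<ge> lam * F (\<lambda>i. t1 * u i + x i) + (1 - lam) * F (\<lambda>i. t2 * u i + x i) - \<epsilon>))"

end

theory Submission
  imports Defs
begin

lemma ml_empty: "multilinear_ext {} h y = h {}"
  by (simp add: multilinear_ext_def)

lemma ml_diff: "multilinear_ext A (\<lambda>S. g1 S - g2 S) y = multilinear_ext A g1 y - multilinear_ext A g2 y"
  unfolding multilinear_ext_def by (simp add: left_diff_distrib sum_subtractf)

lemma ml_insert:
  assumes "finite A" "a \<notin> A"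
  shows "multilinear_ext (insert a A) h y =
     y a * multilinear_ext A (\<lambda>S. h (insert a S)) y + (1 - y a) * multilinear_ext A h y"
proof -
  have P: "Pow (insert a A) = Pow A \<union> insert a ` Pow A" by (rule Pow_insert)
  have disj: "Pow A \<inter> insert a ` Pow A = {}" using assms(2) by auto
  have inj: "inj_on (insert a) (Pow A)" unfolding inj_on_def using assms(2) by (metis PowD insert_ident subsetD)
  have fin: "finite (Pow A)" "finite (insert a ` Pow A)" using assms(1) by auto
  let ?t = "\<lambda>S. h S * (\<Prod>i\<in>S. y i) * (\<Prod>i\<in>insert a A - S. 1 - y i)"
  have "multilinear_ext (insert a A) h y = sum ?t (Pow A) + sum ?t (insert a ` Pow A)"
    unfolding multilinear_ext_def P by (rule sum.union_disjoint[OF fin disj])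
  also have "sum ?t (insert a ` Pow A) = sum (?t \<circ> insert a) (Pow A)"
    by (rule sum.reindex[OF inj])
  also have "\<dots> = (\<Sum>S\<in>Pow A. y a * (h (insert a S) * (\<Prod>i\<in>S. y i) * (\<Prod>i\<in>A - S. 1 - y i)))"
  proof (rule sum.cong[OF refl])
    fix S assume S: "S \<in> Pow A"
    have fS: "finite S" using S assms(1) finite_subset by auto
    have aS: "a \<notin> S" using S assms(2) by auto
    have e: "insert a A - insert a S = A - S" using assms(2) by auto
    show "(?t \<circ> insert a) S = y a * (h (insert a S) * (\<Prod>i\<in>S. y i) * (\<Prod>i\<in>A - S. 1 - y i))"
    proof -
      have "(\<Prod>i\<in>insert a S. y i) = y a * (\<Prod>i\<in>S. y i)" using fS aS by simp
      then show ?thesis by (simp add: e)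
    qed
  qed
  also have "sum ?t (Pow A) = (\<Sum>S\<in>Pow A. (1 - y a) * (h S * (\<Prod>i\<in>S. y i) * (\<Prod>i\<in>A - S. 1 - y i)))"
  proof (rule sum.cong[OF refl])
    fix S assume S: "S \<in> Pow A"
    have aS: "a \<notin> S" using S assms(2) by auto
    have e: "insert a A - S = insert a (A - S)" using aS by auto
    have f: "finite (A - S)" using assms(1) by auto
    show "?t S = (1 - y a) * (h S * (\<Prod>i\<in>S. y i) * (\<Prod>i\<in>A - S. 1 - y i))"
      using f assms(2) by (simp add: e)
  qed
  finally show ?thesis unfolding multilinear_ext_def
    by (simp add: sum_distrib_left[symmetric])
qed

lemma in_cube_insert: "in_cube (insert a A) y \<Longrightarrow> in_cube A y \<and> 0 \<le> y a \<and> y a \<le> 1"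
  by (simp add: in_cube_def)

lemma L0:
  assumes "finite A"
  shows "in_cube A y \<Longrightarrow> (\<forall>S. S \<subseteq> A \<longrightarrow> g S \<le> K) \<Longrightarrow> multilinear_ext A g y \<le> K"
  using assms
proof (induction A arbitrary: g rule: finite_induct)
  case empty
  then show ?case by (simp add: ml_empty)
next
  case (insert a A)
  have c: "in_cube A y" "0 \<le> y a" "y a \<le> 1" using in_cube_insert[OF insert.prems(1)] by auto
  have h1: "multilinear_ext A (\<lambda>S. g (insert a S)) y \<le> K"
    by (rule insert.IH[OF c(1)]) (use insert.prems(2) in \<open>meson insert_mono\<close>)
  have h2: "multilinear_ext A g y \<le> K"
    by (rule insert.IH[OF c(1)]) (use insert.prems(2) in auto)
  have "y a * multilinear_ext A (\<lambda>S. g (insert a S)) y + (1 - y a) * multilinear_ext A g y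
        \<le> y a * K + (1 - y a) * K"
    by (intro add_mono mult_left_mono h1 h2) (use c in auto)
  then show ?case by (simp add: ml_insert[OF insert.hyps] algebra_simps)
qed

lemma L1:
  assumes "finite A"
  shows "in_cube A p \<Longrightarrow> in_cube A q \<Longrightarrow> (\<forall>j\<in>A. 0 \<le> c * (p j - q j)) \<Longrightarrow>
    (\<forall>R j. R \<subseteq> A \<longrightarrow> j \<in> A \<longrightarrow> j \<notin> R \<longrightarrow> g (insert j R) - g R \<le> K) \<Longrightarrow>
    c * (multilinear_ext A g p - multilinear_ext A g q) \<le> K * (\<Sum>j\<in>A. c * (p j - q j))"
  using assms
proof (induction A arbitrary: g rule: finite_induct)
  case empty
  then show ?case by (simp add: ml_empty)
next
  case (insert a A)
  have cp: "in_cube A p" "0 \<le> p a" "p a \<le> 1" using in_cube_insert[OF insert.prems(1)] by auto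
  have cq: "in_cube A q" using in_cube_insert[OF insert.prems(2)] by auto
  have sg: "\<forall>j\<in>A. 0 \<le> c * (p j - q j)" "0 \<le> c * (p a - q a)" using insert.prems(3) by auto
  let ?gp = "\<lambda>S. g (insert a S)"
  let ?S = "(\<Sum>j\<in>A. c * (p j - q j))"
  have h1: "c * (multilinear_ext A ?gp p - multilinear_ext A ?gp q) \<le> K * ?S"
  proof (rule insert.IH[OF cp(1) cq sg(1)], intro allI impI)
    fix R j assume R: "R \<subseteq> A" "j \<in> A" "j \<notin> R"
    have "g (insert j (insert a R)) - g (insert a R) \<le> K"
      by (rule insert.prems(4)[rule_format]) (use R insert.hyps(2) in auto)
    then show "g (insert a (insert j R)) - g (insert a R) \<le> K" by (simp add: insert_commute)
  qed
  have h2: "c * (multilinear_ext A g p - multilinear_ext A g q) \<le> K * ?S"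
  proof (rule insert.IH[OF cp(1) cq sg(1)], intro allI impI)
    fix R j assume R: "R \<subseteq> A" "j \<in> A" "j \<notin> R"
    show "g (insert j R) - g R \<le> K"
      using insert.prems(4) R by auto
  qed
  have h3: "multilinear_ext A (\<lambda>S. g (insert a S) - g S) q \<le> K"
  proof (rule L0[OF insert.hyps(1) cq], intro allI impI)
    fix S assume "S \<subseteq> A"
    then show "g (insert a S) - g S \<le> K" using insert.prems(4) insert.hyps(2) by auto
  qed
  have h3': "c * (p a - q a) * multilinear_ext A (\<lambda>S. g (insert a S) - g S) q \<le> c * (p a - q a) * K"
    by (rule mult_left_mono[OF h3 sg(2)])
  have eq: "c * (multilinear_ext (insert a A) g p - multilinear_ext (insert a A) g q)
     = p a * (c * (multilinear_ext A ?gp p - multilinear_ext A ?gp q))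
       + (1 - p a) * (c * (multilinear_ext A g p - multilinear_ext A g q))
       + c * (p a - q a) * multilinear_ext A (\<lambda>S. g (insert a S) - g S) q"
    by (simp add: ml_insert[OF insert.hyps] ml_diff algebra_simps)
  have "p a * (c * (multilinear_ext A ?gp p - multilinear_ext A ?gp q))
       + (1 - p a) * (c * (multilinear_ext A g p - multilinear_ext A g q))
       + c * (p a - q a) * multilinear_ext A (\<lambda>S. g (insert a S) - g S) q
     \<le> p a * (K * ?S) + (1 - p a) * (K * ?S) + c * (p a - q a) * K"
    by (intro add_mono mult_left_mono h1 h2 h3') (use cp in auto)
  also have "\<dots> = K * (\<Sum>j\<in>insert a A. c * (p j - q j))"
    using insert.hyps by (simp add: algebra_simps)
  finally show ?case using eq by simp
qed

lemma L2:
  assumes "finite A"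
  shows "in_cube A p \<Longrightarrow> in_cube A q \<Longrightarrow> 0 \<le> lam \<Longrightarrow> lam \<le> 1 \<Longrightarrow> 0 \<le> K \<Longrightarrow>
    (\<forall>i\<in>A. r i = lam * p i + (1 - lam) * q i) \<Longrightarrow>
    (\<forall>i\<in>A. \<forall>j\<in>A. 0 \<le> (p i - q i) * (p j - q j)) \<Longrightarrow>
    (\<forall>R i j. R \<subseteq> A \<longrightarrow> i \<in> A \<longrightarrow> j \<in> A \<longrightarrow> i \<notin> R \<longrightarrow> j \<notin> R \<longrightarrow> i \<noteq> j \<longrightarrow>
        h (insert i (insert j R)) - h (insert i R) - h (insert j R) + h R \<le> K) \<Longrightarrow>
    lam * multilinear_ext A h p + (1 - lam) * multilinear_ext A h q - multilinear_ext A h r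
      \<le> lam * (1 - lam) * K * (real (card A) * (real (card A) - 1) / 2)"
  using assms
proof (induction A arbitrary: h rule: finite_induct)
  case empty
  then show ?case by (simp add: ml_empty algebra_simps)
next
  case (insert a A)
  have cp: "in_cube A p" "0 \<le> p a" "p a \<le> 1" using in_cube_insert[OF insert.prems(1)] by auto
  have cq: "in_cube A q" "0 \<le> q a" "q a \<le> 1" using in_cube_insert[OF insert.prems(2)] by auto
  have ra: "r a = lam * p a + (1 - lam) * q a" using insert.prems(6) by auto
  have ra0: "0 \<le> r a" using ra cp cq insert.prems(3,4) by simp
  have ra1: "r a \<le> 1"
  proof -
    have "lam * p a \<le> lam" using cp insert.prems(3) by (simp add: mult_left_le)
    moreover have "(1 - lam) * q a \<le> 1 - lam" using cq insert.prems(4) by (simp add: mult_left_le)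
    ultimately show ?thesis using ra by simp
  qed
  have rA: "\<forall>i\<in>A. r i = lam * p i + (1 - lam) * q i" using insert.prems(6) by auto
  have dA: "\<forall>i\<in>A. \<forall>j\<in>A. 0 \<le> (p i - q i) * (p j - q j)" using insert.prems(7) by auto
  let ?n = "real (card A)"
  let ?B = "lam * (1 - lam) * K * (?n * (?n - 1) / 2)"
  let ?hp = "\<lambda>S. h (insert a S)"
  let ?P1 = "multilinear_ext A ?hp p" let ?P0 = "multilinear_ext A h p"
  let ?Q1 = "multilinear_ext A ?hp q" let ?Q0 = "multilinear_ext A h q"
  let ?R1 = "multilinear_ext A ?hp r" let ?R0 = "multilinear_ext A h r"
  have h1: "lam * ?P1 + (1 - lam) * ?Q1 - ?R1 \<le> ?B"
  proof (rule insert.IH[OF cp(1) cq(1) insert.prems(3,4,5) rA dA], intro allI impI)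
    fix R i j assume R: "R \<subseteq> A" "i \<in> A" "j \<in> A" "i \<notin> R" "j \<notin> R" "i \<noteq> j"
    have "h (insert i (insert j (insert a R))) - h (insert i (insert a R)) - h (insert j (insert a R)) + h (insert a R) \<le> K"
      by (rule insert.prems(8)[rule_format]) (use R insert.hyps(2) in auto)
    then show "h (insert a (insert i (insert j R))) - h (insert a (insert i R)) - h (insert a (insert j R)) + h (insert a R) \<le> K"
      by (simp add: insert_commute)
  qed
  have h0: "lam * ?P0 + (1 - lam) * ?Q0 - ?R0 \<le> ?B"
  proof (rule insert.IH[OF cp(1) cq(1) insert.prems(3,4,5) rA dA], intro allI impI)
    fix R i j assume R: "R \<subseteq> A" "i \<in> A" "j \<in> A" "i \<notin> R" "j \<notin> R" "i \<noteq> j"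
    show "h (insert i (insert j R)) - h (insert i R) - h (insert j R) + h R \<le> K"
      by (rule insert.prems(8)[rule_format]) (use R in auto)
  qed
  let ?c = "p a - q a"
  have sg: "\<forall>j\<in>A. 0 \<le> ?c * (p j - q j)" using insert.prems(7) by auto
  have cross: "?c * (multilinear_ext A (\<lambda>S. h (insert a S) - h S) p - multilinear_ext A (\<lambda>S. h (insert a S) - h S) q)
     \<le> K * (\<Sum>j\<in>A. ?c * (p j - q j))"
  proof (rule L1[OF insert.hyps(1) cp(1) cq(1) sg], intro allI impI)
    fix R j assume R: "R \<subseteq> A" "j \<in> A" "j \<notin> R"
    have "h (insert a (insert j R)) - h (insert a R) - h (insert j R) + h R \<le> K"
      by (rule insert.prems(8)[rule_format]) (use R insert.hyps(2) in auto)
    then show "h (insert a (insert j R)) - h (insert j R) - (h (insert a R) - h R) \<le> K" by simp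
  qed
  have sle: "(\<Sum>j\<in>A. ?c * (p j - q j)) \<le> ?n"
  proof -
    have "(\<Sum>j\<in>A. ?c * (p j - q j)) \<le> (\<Sum>j\<in>A. 1)"
    proof (rule sum_mono)
      fix j assume j: "j \<in> A"
      have "\<bar>?c\<bar> \<le> 1" using cp cq by auto
      moreover have "\<bar>p j - q j\<bar> \<le> 1"
      proof -
        have "0 \<le> p j \<and> p j \<le> 1" "0 \<le> q j \<and> q j \<le> 1" using cp(1) cq(1) j unfolding in_cube_def by auto
        then show ?thesis by (simp add: abs_le_iff)
      qed
      ultimately have "\<bar>?c * (p j - q j)\<bar> \<le> 1"
        by (metis abs_ge_zero abs_mult mult_le_one)
      then show "?c * (p j - q j) \<le> 1" by simp
    qed
    then show ?thesis by simp
  qed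
  have cross2: "?c * ((?P1 - ?P0) - (?Q1 - ?Q0)) \<le> K * ?n"
    using cross sle insert.prems(5) ml_diff[of A ?hp h p] ml_diff[of A ?hp h q]
    by (smt (verit) mult_left_mono)
  have l1: "0 \<le> lam * (1 - lam)" using insert.prems(3,4) by simp
  have eq: "lam * multilinear_ext (insert a A) h p + (1 - lam) * multilinear_ext (insert a A) h q
       - multilinear_ext (insert a A) h r
     = (1 - r a) * (lam * ?P0 + (1 - lam) * ?Q0 - ?R0) + r a * (lam * ?P1 + (1 - lam) * ?Q1 - ?R1)
       + lam * (1 - lam) * (?c * ((?P1 - ?P0) - (?Q1 - ?Q0)))"
    by (simp add: ml_insert[OF insert.hyps] ra algebra_simps)
  have "(1 - r a) * (lam * ?P0 + (1 - lam) * ?Q0 - ?R0) + r a * (lam * ?P1 + (1 - lam) * ?Q1 - ?R1)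
       + lam * (1 - lam) * (?c * ((?P1 - ?P0) - (?Q1 - ?Q0)))
     \<le> (1 - r a) * ?B + r a * ?B + lam * (1 - lam) * (K * ?n)"
    by (intro add_mono mult_left_mono h0 h1 cross2 l1) (use ra0 ra1 in auto)
  also have "\<dots> = lam * (1 - lam) * K * (real (card (insert a A)) * (real (card (insert a A)) - 1) / 2)"
  proof -
    have c: "real (card (insert a A)) = ?n + 1" using insert.hyps by simp
    show ?thesis unfolding c by (simp add: field_simps)
  qed
  finally show ?case using eq by simp
qed


lemma D_facts:
  assumes fin: "finite \<Omega>"
  shows "\<forall>R i j. R \<subseteq> \<Omega> \<longrightarrow> i \<in> \<Omega> \<longrightarrow> j \<in> \<Omega> \<longrightarrow> i \<notin> R \<longrightarrow> j \<notin> R \<longrightarrow> i \<noteq> j \<longrightarrow>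
        f (insert i (insert j R)) - f (insert i R) - f (insert j R) + f R \<le> D_f \<Omega> f"
    and "\<Omega> \<noteq> {} \<Longrightarrow> 0 \<le> D_f \<Omega> f"
proof -
  let ?M = "{f (A \<union> B \<union> {s}) - f (A \<union> B) - f (A \<union> {s}) + f A
                    | A B s. A \<subseteq> \<Omega> \<and> B \<subseteq> \<Omega> \<and> s \<in> \<Omega> \<and> card A \<le> card \<Omega> - 1}"
  have "?M \<subseteq> (\<lambda>(A,B,s). f (A \<union> B \<union> {s}) - f (A \<union> B) - f (A \<union> {s}) + f A) ` (Pow \<Omega> \<times> Pow \<Omega> \<times> \<Omega>)"
  proof
    fix z assume "z \<in> ?M"
    then obtain A B s where z: "z = f (A \<union> B \<union> {s}) - f (A \<union> B) - f (A \<union> {s}) + f A"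
      and AB: "A \<subseteq> \<Omega>" "B \<subseteq> \<Omega>" "s \<in> \<Omega>" by blast
    show "z \<in> (\<lambda>(A,B,s). f (A \<union> B \<union> {s}) - f (A \<union> B) - f (A \<union> {s}) + f A) ` (Pow \<Omega> \<times> Pow \<Omega> \<times> \<Omega>)"
      by (rule image_eqI[where x="(A,B,s)"]) (use z AB in auto)
  qed
  moreover have "finite ((\<lambda>(A,B,s). f (A \<union> B \<union> {s}) - f (A \<union> B) - f (A \<union> {s}) + f A) ` (Pow \<Omega> \<times> Pow \<Omega> \<times> \<Omega>))"
    using fin by auto
  ultimately have finM: "finite ?M" by (rule finite_subset)
  show "\<forall>R i j. R \<subseteq> \<Omega> \<longrightarrow> i \<in> \<Omega> \<longrightarrow> j \<in> \<Omega> \<longrightarrow> i \<notin> R \<longrightarrow> j \<notin> R \<longrightarrow> i \<noteq> j \<longrightarrow>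
        f (insert i (insert j R)) - f (insert i R) - f (insert j R) + f R \<le> D_f \<Omega> f"
  proof (intro allI impI)
    fix R i j assume R: "R \<subseteq> \<Omega>" "i \<in> \<Omega>" "j \<in> \<Omega>" "i \<notin> R" "j \<notin> R" "i \<noteq> j"
    have "R \<subset> \<Omega>" using R by auto
    then have "card R < card \<Omega>" using fin by (rule psubset_card_mono[rotated])
    then have cR: "card R \<le> card \<Omega> - 1" by simp
    have "f (R \<union> {j} \<union> {i}) - f (R \<union> {j}) - f (R \<union> {i}) + f R \<in> ?M"
      using R cR by blast
    then have "f (R \<union> {j} \<union> {i}) - f (R \<union> {j}) - f (R \<union> {i}) + f R \<le> D_f \<Omega> f"
      unfolding D_f_def using finM by (rule Max_ge[rotated])
    moreover have "R \<union> {j} \<union> {i} = insert i (insert j R)" "R \<union> {j} = insert j R" "R \<union> {i} = insert i R"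
      by auto
    ultimately show "f (insert i (insert j R)) - f (insert i R) - f (insert j R) + f R \<le> D_f \<Omega> f"
      by simp
  qed
  assume "\<Omega> \<noteq> {}"
  then obtain s where s: "s \<in> \<Omega>" by auto
  have "f ({} \<union> {} \<union> {s}) - f ({} \<union> {}) - f ({} \<union> {s}) + f {} \<in> ?M"
    apply (rule CollectI, rule exI[of _ "{}"], rule exI[of _ "{}"], rule exI[of _ s])
    using s by simp
  then have "f ({} \<union> {} \<union> {s}) - f ({} \<union> {}) - f ({} \<union> {s}) + f {} \<le> D_f \<Omega> f"
    unfolding D_f_def using finM by (rule Max_ge[rotated])
  then show "0 \<le> D_f \<Omega> f" by simp
qed

lemma num_bound:
  fixes n :: real
  assumes "1 \<le> n"
  shows "n * (n - 1) / 8 \<le> n * (n powr (3/2) - 1) * 2 powr (n - 4)"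
proof -
  have a: "n \<le> n powr (3/2)"
    using powr_mono[of 1 "3/2" n] assms by simp
  have b: "1/8 \<le> (2::real) powr (n - 4)"
  proof -
    have "(2::real) powr (-3) \<le> 2 powr (n - 4)" by (rule powr_mono) (use assms in auto)
    moreover have "(2::real) powr (-3) = 1/8" by (simp add: powr_minus powr_numeral)
    ultimately show ?thesis by simp
  qed
  have "(n - 1) * (1/8) \<le> (n powr (3/2) - 1) * 2 powr (n - 4)"
    by (rule mult_mono) (use a b assms in auto)
  then have "n * ((n - 1) * (1/8)) \<le> n * ((n powr (3/2) - 1) * 2 powr (n - 4))"
    by (rule mult_left_mono) (use assms in auto)
  then show ?thesis by (simp add: algebra_simps)
qed

theorem mainTheorem8:
  fixes \<Omega> :: "'a set" and f :: "'a set \<Rightarrow> real"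
  assumes "finite \<Omega>"
    and "\<And>A B. A \<subseteq> B \<Longrightarrow> B \<subseteq> \<Omega> \<Longrightarrow> f A \<le> f B"
    and "f {} = 0"
  shows "eps_up_concave \<Omega>
           (real (card \<Omega>) * (real (card \<Omega>) powr (3/2) - 1)
              * 2 powr (real (card \<Omega>) - 4) * D_f \<Omega> f)
           (multilinear_ext \<Omega> f)"
proof (cases "\<Omega> = {}")
  case True
  then show ?thesis unfolding eps_up_concave_def by (simp add: ml_empty algebra_simps)
next
  case False
  let ?n = "real (card \<Omega>)"
  let ?D = "D_f \<Omega> f"
  have n1: "1 \<le> ?n" using False assms(1) by (simp add: Suc_leI card_gt_0_iff)
  have D0: "0 \<le> ?D" using D_facts(2)[OF assms(1) False] .
  have eps: "?n * (?n - 1) / 8 * ?D \<le> ?n * (?n powr (3/2) - 1) * 2 powr (?n - 4) * ?D"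
    by (rule mult_right_mono[OF num_bound[OF n1] D0])
  have e0: "0 \<le> ?n * (?n - 1) / 8 * ?D" using n1 D0 by simp
  show ?thesis
    unfolding eps_up_concave_def
  proof (intro conjI allI impI)
    show "0 \<le> ?n * (?n powr (3/2) - 1) * 2 powr (?n - 4) * ?D" using eps e0 by linarith
    fix u x lam t1 t2
    assume u: "\<forall>i\<in>\<Omega>. 0 \<le> u i" and x: "in_cube \<Omega> x" and l0: "0 \<le> lam" and l1: "lam \<le> 1"
      and p: "in_cube \<Omega> (\<lambda>i. t1 * u i + x i)" and q: "in_cube \<Omega> (\<lambda>i. t2 * u i + x i)"
      and "in_cube \<Omega> (\<lambda>i. x i + lam * t1 * u i + (1 - lam) * t2 * u i)"
    let ?p = "\<lambda>i. t1 * u i + x i" and ?q = "\<lambda>i. t2 * u i + x i"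
      and ?r = "\<lambda>i. (lam * t1 + (1 - lam) * t2) * u i + x i"
    have rr: "\<forall>i\<in>\<Omega>. ?r i = lam * ?p i + (1 - lam) * ?q i" by (simp add: algebra_simps)
    have dd: "\<forall>i\<in>\<Omega>. \<forall>j\<in>\<Omega>. 0 \<le> (?p i - ?q i) * (?p j - ?q j)"
    proof (intro ballI)
      fix i j assume "i \<in> \<Omega>" "j \<in> \<Omega>"
      then have "0 \<le> (t1 - t2)^2 * (u i * u j)" using u by simp
      then show "0 \<le> (?p i - ?q i) * (?p j - ?q j)" by (simp add: power2_eq_square algebra_simps)
    qed
    have main: "lam * multilinear_ext \<Omega> f ?p + (1 - lam) * multilinear_ext \<Omega> f ?q - multilinear_ext \<Omega> f ?r
       \<le> lam * (1 - lam) * ?D * (?n * (?n - 1) / 2)"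
      by (rule L2[OF assms(1) p q l0 l1 D0 rr dd D_facts(1)[OF assms(1)]])
    have ll: "lam * (1 - lam) \<le> 1/4"
    proof -
      have "0 \<le> (lam - 1/2)^2" by simp
      then show ?thesis by (simp add: power2_eq_square algebra_simps)
    qed
    have nn: "0 \<le> ?D * (?n * (?n - 1) / 2)" using n1 D0 by simp
    have "lam * (1 - lam) * ?D * (?n * (?n - 1) / 2) \<le> 1/4 * (?D * (?n * (?n - 1) / 2))"
      using mult_right_mono[OF ll nn] by (simp add: algebra_simps)
    also have "\<dots> = ?n * (?n - 1) / 8 * ?D" by simp
    finally have "lam * multilinear_ext \<Omega> f ?p + (1 - lam) * multilinear_ext \<Omega> f ?q - multilinear_ext \<Omega> f ?r
       \<le> ?n * (?n powr (3/2) - 1) * 2 powr (?n - 4) * ?D" using main eps by linarith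
    then show "lam * multilinear_ext \<Omega> f ?p + (1 - lam) * multilinear_ext \<Omega> f ?q
        - ?n * (?n powr (3/2) - 1) * 2 powr (?n - 4) * ?D \<le> multilinear_ext \<Omega> f ?r"
      by linarith
  qed
qed

end
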